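(* Let $E$ be a Euclidean space. For closed subsets $V_1,\dots,V_s$ and $W$ of $E$, \[\tau(W\cap V_1\cap\dots\cap V_s)\geqslant\min_{I\subseteq\{1,\dots,s\}}\tau\Big(W\cap\bigcap_{i\in I}\partial V_i\Big).\]
   Context: For nonempty $A\subseteq E$, $d_A(x)=\inf_{a\in A}\|x-a\|$, and $d_\varnothing=+\infty$. For nonempty closed $A$, the medial axis is the closure of $\Delta_A=\{x\in E:\exists a\neq b\in A,\ \|x-a\|=\|x-b\|=d_A(x)\}$, $\tau(A,p)=d_{\Delta_A}(p)$ for $p\in A$, and the reach is $\tau(A)=\inf_{p\in A}\tau(A,p)$; $\tau(\varnothing)=+\infty$. $\partial V_i$ is the topological boundary of $V_i$; the term for $I=\varnothing$ is $\tau(W)$. *)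

theory Defs
  imports "HOL-Analysis.Analysis"
begin

text \<open>d_A(x) for nonempty A is infdist x A. The set Delta_A of points with at least
two distinct nearest points in A.\<close>
definition medial_pts :: "'a::euclidean_space set \<Rightarrow> 'a set" where
  "medial_pts A = {x. \<exists>a b. a \<in> A \<and> b \<in> A \<and> a \<noteq> b \<and>
      dist x a = infdist x A \<and> dist x b = infdist x A}"

definition medial_axis :: "'a::euclidean_space set \<Rightarrow> 'a set" where
  "medial_axis A = closure (medial_pts A)"

definition local_reach :: "'a::euclidean_space set \<Rightarrow> 'a \<Rightarrow> ereal" where
  "local_reach A p = (if medial_axis A = {} then \<infinity> else ereal (infdist p (medial_axis A)))"

text \<open>Reach: infimum over A of the local reach; the empty set has reach +infinity
(INF over the empty set in ereal is top).\<close>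
definition reach :: "'a::euclidean_space set \<Rightarrow> ereal" where
  "reach A = (INF p\<in>A. local_reach A p)"

end

theory Submission imports Defs begin

lemma infdist_ge:
  assumes "A \<noteq> {}" "\<And>a. a \<in> A \<Longrightarrow> m \<le> dist x a"
  shows "m \<le> infdist x A"
  using assms by (simp add: infdist_notempty cINF_greatest)

lemma reach_le_infdist:
  assumes "y \<in> medial_pts A" "a \<in> A" "dist y a = infdist y A"
  shows "reach A \<le> ereal (infdist y A)"
proof -
  have ne: "medial_axis A \<noteq> {}" using assms(1) closure_subset unfolding medial_axis_def by blast
  have "reach A \<le> local_reach A a" unfolding reach_def using assms(2) by (rule INF_lower)
  also have "\<dots> = ereal (infdist a (medial_axis A))" using ne by (simp add: local_reach_def)
  also have "infdist a (medial_axis A) \<le> dist a y"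
    using assms(1) closure_subset unfolding medial_axis_def by (intro infdist_le) blast
  hence "ereal (infdist a (medial_axis A)) \<le> ereal (infdist y A)" using assms(3) by (simp add: dist_commute)
  finally show ?thesis .
qed

lemma dist_seg1: fixes a x :: "'a::real_normed_vector" shows "dist (a + t *\<^sub>R (x - a)) a = \<bar>t\<bar> * dist x a"
  by (simp add: dist_norm)
lemma dist_seg2: fixes a x :: "'a::real_normed_vector" shows "dist x (a + t *\<^sub>R (x - a)) = \<bar>1 - t\<bar> * dist x a"
proof -
  have "x - (a + t *\<^sub>R (x - a)) = (1 - t) *\<^sub>R (x - a)" by (simp add: algebra_simps scaleR_diff_left)
  thus ?thesis by (simp add: dist_norm)
qed
lemma dist_seg3: fixes a x :: "'a::real_normed_vector" shows "dist (a + t *\<^sub>R (x - a)) (a + s *\<^sub>R (x - a)) = \<bar>t - s\<bar> * dist x a"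
proof -
  have "(a + t *\<^sub>R (x - a)) - (a + s *\<^sub>R (x - a)) = (t - s) *\<^sub>R (x - a)" by (simp add: algebra_simps scaleR_diff_left)
  thus ?thesis by (simp add: dist_norm)
qed


lemma interior_case:
  fixes A B :: "'a::euclidean_space set"
  assumes clA: "closed A" and aA: "a \<in> A" and aint: "a \<in> interior B"
    and hC: "\<forall>c\<in>A\<inter>B. r \<le> dist x c" and xa: "dist x a = r" and rr: "ereal r < reach A"
  shows "\<forall>q\<in>A. r \<le> dist x q"
proof -
  define y where "y t = a + t *\<^sub>R (x - a)" for t
  define S where "S = {t\<in>{0..1}. \<forall>q\<in>A. t*r \<le> dist (y t) q}"
  have r0: "0 \<le> r" using xa by auto
  have y0: "y 0 = a" and y1: "y 1 = x" by (simp_all add: y_def)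
  have dy: "dist (y t) a = \<bar>t\<bar> * r" for t unfolding y_def using dist_seg1 xa by metis
  have dxy: "dist x (y t) = \<bar>1 - t\<bar> * r" for t unfolding y_def using dist_seg2 xa by metis
  have dyy: "dist (y t) (y s) = \<bar>t - s\<bar> * r" for t s unfolding y_def using dist_seg3 xa by metis
  have clS: "closed S"
  proof -
    have "S = {0..1} \<inter> (\<Inter>q\<in>A. {t. t*r \<le> dist (y t) q})" unfolding S_def by auto
    moreover have "closed {t. t*r \<le> dist (y t) q}" for q
      unfolding y_def by (intro closed_Collect_le continuous_intros)
    ultimately show ?thesis by auto
  qed
  have S0: "0 \<in> S" unfolding S_def by (simp add: y0)
  have bdd: "bdd_above S" unfolding S_def by (rule bdd_aboveI[of _ 1]) auto
  define T where "T = Sup S"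
  have TS: "T \<in> S" unfolding T_def using closed_contains_Sup[OF _ bdd clS] S0 by auto
  hence T01: "0 \<le> T" "T \<le> 1" and hT: "\<forall>q\<in>A. T*r \<le> dist (y T) q" unfolding S_def by auto
  have "T = 1"
  proof (rule ccontr)
    assume "T \<noteq> 1"
    hence T1: "T < 1" using T01 by auto
    have Tr: "T * r \<le> r" using T01 r0 by (simp add: mult_left_le_one_le)
    have uniq: "q = a" if "q \<in> A" "dist (y T) q = T*r" for q
    proof (rule ccontr)
      assume "q \<noteq> a"
      have inf: "infdist (y T) A = T*r"
      proof (rule antisym)
        show "infdist (y T) A \<le> T*r" using infdist_le[OF aA, of "y T"] dy[of T] T01 by simp
        show "T*r \<le> infdist (y T) A" using hT aA by (intro infdist_ge) auto
      qed
      have "y T \<in> medial_pts A" unfolding medial_pts_def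
        using aA that \<open>q \<noteq> a\<close> inf dy[of T] T01 by auto
      from reach_le_infdist[OF this aA] have "reach A \<le> ereal (T*r)"
        using inf dy[of T] T01 by simp
      also have "\<dots> \<le> ereal r" using Tr by simp
      finally show False using rr by simp
    qed
    obtain e where e: "e > 0" "ball a e \<subseteq> B" using aint mem_interior by blast
    define K where "K = (A \<inter> cball (y T) (2*r+1)) - ball a e"
    have cK: "compact K" unfolding K_def using clA by (intro compact_diff) auto
    have "\<exists>d>0. \<forall>q\<in>K. T*r + d \<le> dist (y T) q"
    proof (cases "K = {}")
      case True then show ?thesis by (intro exI[of _ 1]) auto
    next
      case False
      obtain q0 where q0: "q0 \<in> K" "\<forall>q\<in>K. dist (y T) q0 \<le> dist (y T) q"
      proof -
        have "continuous_on K (dist (y T))" by (intro continuous_intros)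
        thus ?thesis using continuous_attains_inf[OF cK False, of "dist (y T)"] that by blast
      qed
      have "q0 \<in> A" "q0 \<noteq> a" using q0(1) e(1) unfolding K_def by auto
      hence "dist (y T) q0 \<noteq> T*r" using uniq by blast
      hence "T*r < dist (y T) q0" using hT \<open>q0 \<in> A\<close> by force
      thus ?thesis using q0(2) by (intro exI[of _ "dist (y T) q0 - T*r"]) auto
    qed
    then obtain d where d: "d > 0" "\<forall>q\<in>K. T*r + d \<le> dist (y T) q" by blast
    define t where "t = min 1 (T + d/(2*r+1))"
    have pos: "d/(2*r+1) > 0" using d r0 by simp
    have Tt: "T < t" using T1 pos unfolding t_def by auto
    have t1: "t \<le> 1" unfolding t_def by simp
    have "(t - T) * r \<le> d/(2*r+1) * r" using r0 unfolding t_def by (intro mult_right_mono) auto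
    also have "\<dots> \<le> d/2" using d r0 by (simp add: field_simps)
    finally have tT: "(t - T) * r \<le> d/2" .
    have tT2: "(t - T) * r \<le> r" using t1 T01 r0 Tt by (simp add: mult_left_le_one_le)
    have dyt: "dist (y t) (y T) = (t - T) * r" using dyy[of t T] Tt by simp
    have "t \<in> S" unfolding S_def
    proof (intro CollectI conjI ballI)
      show "t \<in> {0..1}" using Tt T01 t1 by auto
      fix q assume qA: "q \<in> A"
      show "t * r \<le> dist (y t) q"
      proof (cases "q \<in> ball a e")
        case True
        hence "q \<in> A \<inter> B" using qA e by auto
        hence "r \<le> dist x q" using hC by auto
        moreover have "dist x q \<le> dist x (y t) + dist (y t) q" by (rule dist_triangle)
        moreover have "dist x (y t) = (1 - t) * r" using dxy[of t] t1 by simp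
        ultimately show ?thesis by (simp add: algebra_simps)
      next
        case False
        have tri: "dist (y T) q \<le> dist (y T) (y t) + dist (y t) q" by (rule dist_triangle)
        have tr: "t * r \<le> r" using t1 Tt T01 r0 by (simp add: mult_left_le_one_le)
        show ?thesis
        proof (cases "dist (y T) q \<le> 2*r+1")
          case True
          hence "q \<in> K" unfolding K_def using qA False by (auto simp: dist_commute)
          hence "T*r + d \<le> dist (y T) q" using d by auto
          thus ?thesis using tri dyt tT by (simp add: dist_commute algebra_simps)
        next
          case False
          thus ?thesis using tri dyt tT2 tr by (simp add: dist_commute)
        qed
      qed
    qed
    hence "t \<le> T" unfolding T_def using bdd by (rule cSup_upper)
    thus False using Tt by simp
  qed
  thus ?thesis using TS y1 unfolding S_def by auto
qed


lemma in_frontier_case: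
  fixes A B :: "'a::euclidean_space set"
  assumes clA: "closed A" and aA: "a \<in> A" and aB: "a \<in> B" and bA: "b \<in> A" and ab: "a \<noteq> b"
    and hC: "\<forall>c\<in>A\<inter>B. r \<le> dist x c" and xa: "dist x a = r" and xb: "dist x b = r"
    and rr: "ereal r < reach A"
  shows "a \<in> frontier B"
proof (rule ccontr)
  assume "a \<notin> frontier B"
  hence ai: "a \<in> interior B" using aB closure_subset unfolding frontier_def by blast
  have all: "\<forall>q\<in>A. r \<le> dist x q" by (rule interior_case[OF clA aA ai hC xa rr])
  have inf: "infdist x A = r"
  proof (rule antisym)
    show "infdist x A \<le> r" using infdist_le[OF aA, of x] xa by simp
    show "r \<le> infdist x A" using all aA by (intro infdist_ge) auto
  qed
  have "x \<in> medial_pts A" unfolding medial_pts_def using aA bA ab inf xa xb by auto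
  from reach_le_infdist[OF this aA] have "reach A \<le> ereal r" using inf xa by simp
  thus False using rr by simp
qed

lemma key:
  fixes A B :: "'a::euclidean_space set"
  assumes clA: "closed A" and clB: "closed B"
  shows "min (reach A) (reach (A \<inter> frontier B)) \<le> reach (A \<inter> B)"
proof -
  define m where "m = min (reach A) (reach (A \<inter> frontier B))"
  define C where "C = A \<inter> B"
  define D where "D = A \<inter> frontier B"
  have core: "m \<le> ereal (infdist x C)" if xm: "x \<in> medial_pts C" for x
  proof (rule ccontr)
    assume "\<not> m \<le> ereal (infdist x C)"
    hence r1: "ereal (infdist x C) < reach A" and r2: "ereal (infdist x C) < reach D"
      unfolding m_def D_def by (auto simp: not_le min_less_iff_conj)
    define r where "r = infdist x C"
    obtain a b where ab: "a \<in> C" "b \<in> C" "a \<noteq> b" "dist x a = r" "dist x b = r"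
      using xm unfolding medial_pts_def r_def by auto
    have hC: "\<forall>c\<in>A\<inter>B. r \<le> dist x c" unfolding r_def C_def by (auto intro: infdist_le)
    have hC': "\<forall>c\<in>A\<inter>B. r \<le> dist x c" using hC .
    have r1': "ereal r < reach A" using r1 unfolding r_def .
    have "a \<in> frontier B"
      using in_frontier_case[OF clA _ _ _ _ hC' _ _ r1', of a b] ab unfolding C_def by auto
    moreover have "b \<in> frontier B"
      using in_frontier_case[OF clA _ _ _ _ hC' _ _ r1', of b a] ab unfolding C_def by auto
    ultimately have aD: "a \<in> D" and bD: "b \<in> D" using ab unfolding C_def D_def by auto
    have inf: "infdist x D = r"
    proof (rule antisym)
      show "infdist x D \<le> r" using infdist_le[OF aD, of x] ab by simp
      have "D \<subseteq> C" unfolding D_def C_def using clB frontier_subset_closed by auto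
      thus "r \<le> infdist x D" unfolding r_def using aD by (intro infdist_mono) auto
    qed
    have "x \<in> medial_pts D" unfolding medial_pts_def using aD bD ab inf by auto
    from reach_le_infdist[OF this aD] have "reach D \<le> ereal r" using inf ab by simp
    thus False using r2 unfolding r_def by simp
  qed
  have "m \<le> local_reach C p" if pC: "p \<in> C" for p
  proof (cases "medial_axis C = {}")
    case True thus ?thesis by (simp add: local_reach_def)
  next
    case False
    hence ne: "medial_pts C \<noteq> {}" unfolding medial_axis_def by auto
    have h: "m \<le> ereal (dist p x)" if "x \<in> medial_pts C" for x
    proof -
      have "infdist x C \<le> dist p x" using infdist_le[OF pC, of x] by (simp add: dist_commute)
      thus ?thesis using core[OF that] order_trans by fastforce
    qed
    show ?thesis
    proof (cases m)
      case (real \<mu>)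
      have "medial_pts C \<subseteq> {z. \<mu> \<le> dist p z}" using h real by auto
      moreover have "closed {z. \<mu> \<le> dist p z}" by (intro closed_Collect_le continuous_intros)
      ultimately have "medial_axis C \<subseteq> {z. \<mu> \<le> dist p z}" unfolding medial_axis_def
        by (rule closure_minimal)
      hence "\<mu> \<le> infdist p (medial_axis C)" using False by (intro infdist_ge) auto
      thus ?thesis using False real by (simp add: local_reach_def)
    next
      case PInf
      then show ?thesis using h ne by auto
    next
      case MInf then show ?thesis by simp
    qed
  qed
  hence "m \<le> reach C" unfolding reach_def by (rule INF_greatest)
  thus ?thesis unfolding m_def C_def .
qed

lemma general:
  fixes V :: "nat \<Rightarrow> 'a::euclidean_space set"
  assumes "finite S" "\<And>i. i \<in> S \<Longrightarrow> closed (V i)" "closed W"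
  shows "Min ((\<lambda>I. reach (W \<inter> (\<Inter>i\<in>I. frontier (V i)))) ` Pow S) \<le> reach (W \<inter> (\<Inter>i\<in>S. V i))"
  using assms
proof (induction S arbitrary: W rule: finite_induct)
  case empty
  then show ?case by simp
next
  case (insert j S)
  define f where "f W' = (\<lambda>I. reach (W' \<inter> (\<Inter>i\<in>I. frontier (V i))))" for W'
  define A where "A = W \<inter> (\<Inter>i\<in>S. V i)"
  have clA: "closed A" unfolding A_def using insert by auto
  have clV: "closed (V j)" using insert by auto
  have IH1: "Min (f W ` Pow S) \<le> reach A" unfolding f_def A_def using insert by auto
  have "Min (f (W \<inter> frontier (V j)) ` Pow S) \<le> reach ((W \<inter> frontier (V j)) \<inter> (\<Inter>i\<in>S. V i))"
    unfolding f_def using insert by (intro insert.IH) auto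
  moreover have "(W \<inter> frontier (V j)) \<inter> (\<Inter>i\<in>S. V i) = A \<inter> frontier (V j)" unfolding A_def by auto
  ultimately have IH2: "Min (f (W \<inter> frontier (V j)) ` Pow S) \<le> reach (A \<inter> frontier (V j))" by simp
  have fin: "finite (f W ` Pow (insert j S))" using insert by auto
  have m1: "Min (f W ` Pow (insert j S)) \<le> Min (f W ` Pow S)"
    using fin by (intro Min_antimono) (auto simp: Pow_mono subset_insertI image_mono)
  have sub: "f (W \<inter> frontier (V j)) ` Pow S \<subseteq> f W ` Pow (insert j S)"
  proof
    fix z assume "z \<in> f (W \<inter> frontier (V j)) ` Pow S"
    then obtain I where I: "I \<subseteq> S" "z = f (W \<inter> frontier (V j)) I" by auto
    have "z = f W (insert j I)" unfolding I(2) f_def by (simp add: Int_assoc Int_left_commute)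
    thus "z \<in> f W ` Pow (insert j S)" using I(1) by auto
  qed
  have m2: "Min (f W ` Pow (insert j S)) \<le> Min (f (W \<inter> frontier (V j)) ` Pow S)"
    using fin sub by (intro Min_antimono) auto
  have "Min (f W ` Pow (insert j S)) \<le> min (reach A) (reach (A \<inter> frontier (V j)))"
    using m1 m2 IH1 IH2 by (meson min.boundedI order_trans)
  also have "\<dots> \<le> reach (A \<inter> V j)" by (rule key[OF clA clV])
  also have "A \<inter> V j = W \<inter> (\<Inter>i\<in>insert j S. V i)" unfolding A_def by auto
  finally show ?case unfolding f_def .
qed

theorem corollary2p6:
  fixes V :: "nat \<Rightarrow> 'a::euclidean_space set" and W :: "'a set" and s :: nat
  assumes "\<And>i. i \<in> {1..s} \<Longrightarrow> closed (V i)"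
    and "closed W"
  shows "reach (W \<inter> (\<Inter>i\<in>{1..s}. V i))
           \<ge> Min ((\<lambda>I. reach (W \<inter> (\<Inter>i\<in>I. frontier (V i)))) ` Pow {1..s})"
  using general[of "{1..s}" V W] assms by simp

end
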